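(* Let $\|\cdot\|$ be a strictly convex norm on $\mathbb R^2$ that is $C^1$ on $\mathbb R^2\setminus\{0\}$. There is a constant $C>0$ depending only on $\mathsf B$ such that $\mathrm c^{1D}(z^+,z^-)\le C\,\mathrm c^{\mathrm{ENT}}(z^+,z^-)$ for all distinct $z^+,z^-\in\partial\mathsf B$.
   Context: $\mathsf B=\{\|z\|<1\}$ normalized so that $\partial\mathsf B$ has length $2\pi$; $\gamma$ is its counterclockwise arc-length parametrization; $\mathbb R^2\cong\mathbb C$, $i$ = rotation by $\pi/2$. For distinct $z^\pm\in\partial\mathsf B$: $\nu=i\frac{z^+-z^-}{|z^+-z^-|}$, $a=z^+\cdot\nu=z^-\cdot\nu$, $\mathrm c^{1D}(z^+,z^-)=2\big|\int_{z^-\cdot i\nu}^{z^+\cdot i\nu}(1-\|a\nu+s\,i\nu\|^2)\,ds\big|$, and $\mathrm c^{\mathrm{ENT}}(z^+,z^-)=\sup_{\lambda\in\Lambda_*}\int_{\theta^-}^{\theta^+}\lambda(t)\gamma'(t)\cdot\nu\,dt$ with $z^\pm=\gamma(\theta^\pm)$, $\Lambda_*=\{\lambda\in C^1(\mathbb R/2\pi\mathbb Z):\int_{\mathbb R/2\pi\mathbb Z}\lambda\gamma'=0,\ \|\lambda'\|_\infty\le1\}$. *)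

theory Defs
  imports "HOL-Complex_Analysis.Complex_Analysis"
begin

text \<open>R^2 is identified with the complex plane; the dot product is the Euclidean
  inner product on complex (Re x * Re y + Im x * Im y); i is multiplication by \<i>.\<close>

definition is_norm :: "(complex \<Rightarrow> real) \<Rightarrow> bool" where
  "is_norm N \<longleftrightarrow> (\<forall>x. 0 \<le> N x) \<and> (\<forall>x. N x = 0 \<longleftrightarrow> x = 0)
     \<and> (\<forall>(c::real) x. N (of_real c * x) = \<bar>c\<bar> * N x)
     \<and> (\<forall>x y. N (x + y) \<le> N x + N y)"

definition strictly_convex_norm :: "(complex \<Rightarrow> real) \<Rightarrow> bool" where
  "strictly_convex_norm N \<longleftrightarrow>
     (\<forall>x y. N x = 1 \<longrightarrow> N y = 1 \<longrightarrow> x \<noteq> y \<longrightarrow> N ((x + y) / 2) < 1)"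

definition C1_away_from_0 :: "(complex \<Rightarrow> real) \<Rightarrow> bool" where
  "C1_away_from_0 N \<longleftrightarrow> (\<exists>g::complex \<Rightarrow> complex.
     (\<forall>x. x \<noteq> 0 \<longrightarrow> (N has_derivative (\<lambda>h. g x \<bullet> h)) (at x))
     \<and> continuous_on (- {0}) g)"

definition unitball :: "(complex \<Rightarrow> real) \<Rightarrow> complex set" where
  "unitball N = {z. N z < 1}"

text \<open>Existence of such
  a gamma encodes the normalisation that the boundary of B has length 2pi.\<close>
definition ccw_arclength_param :: "(complex \<Rightarrow> real) \<Rightarrow> (real \<Rightarrow> complex) \<Rightarrow> bool" where
  "ccw_arclength_param N \<gamma> \<longleftrightarrow>
     (\<forall>t. \<gamma> (t + 2 * pi) = \<gamma> t)
     \<and> (\<forall>t. (\<gamma> has_vector_derivative vector_derivative \<gamma> (at t)) (at t))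
     \<and> continuous_on UNIV (\<lambda>t. vector_derivative \<gamma> (at t))
     \<and> (\<forall>t. norm (vector_derivative \<gamma> (at t)) = 1)
     \<and> inj_on \<gamma> {0..<2 * pi}
     \<and> \<gamma> ` {0..<2 * pi} = frontier (unitball N)
     \<and> winding_number (\<lambda>s. \<gamma> (2 * pi * s)) 0 = 1"

definition oint :: "real \<Rightarrow> real \<Rightarrow> (real \<Rightarrow> real) \<Rightarrow> real" where
  "oint a b f = (if a \<le> b then integral {a..b} f else - integral {b..a} f)"

definition Lambda_star :: "(real \<Rightarrow> complex) \<Rightarrow> (real \<Rightarrow> real) set" where
  "Lambda_star \<gamma> = {lam. (\<forall>t. lam (t + 2 * pi) = lam t)
       \<and> (\<forall>t. lam differentiable (at t))
       \<and> continuous_on UNIV (deriv lam)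
       \<and> integral {0..2 * pi} (\<lambda>t. lam t *\<^sub>R vector_derivative \<gamma> (at t)) = 0
       \<and> (\<forall>t. \<bar>deriv lam t\<bar> \<le> 1)}"

definition nu :: "complex \<Rightarrow> complex \<Rightarrow> complex" where
  "nu zp zm = \<i> * (zp - zm) / of_real (cmod (zp - zm))"

definition c_1D :: "(complex \<Rightarrow> real) \<Rightarrow> complex \<Rightarrow> complex \<Rightarrow> real" where
  "c_1D N zp zm =
     (let \<nu> = nu zp zm; a = zp \<bullet> \<nu>
      in 2 * \<bar>oint (zm \<bullet> (\<i> * \<nu>)) (zp \<bullet> (\<i> * \<nu>))
                 (\<lambda>s. 1 - (N (of_real a * \<nu> + of_real s * (\<i> * \<nu>)))\<^sup>2)\<bar>)"

text \<open>c^ENT evaluated with z^+ = gamma thp, z^- = gamma thm.\<close>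
definition c_ENT :: "(real \<Rightarrow> complex) \<Rightarrow> real \<Rightarrow> real \<Rightarrow> real" where
  "c_ENT \<gamma> thp thm =
     Sup ((\<lambda>lam. oint thm thp (\<lambda>t. lam t * (vector_derivative \<gamma> (at t) \<bullet> nu (\<gamma> thp) (\<gamma> thm))))
          ` Lambda_star \<gamma>)"

end

theory Submission
  imports Defs
begin


definition prim :: "(real \<Rightarrow> real) \<Rightarrow> real \<Rightarrow> real" where
  "prim g x = integral {0..x} g - integral {x..0} g"

lemma prim_shift:
  assumes g: "continuous_on UNIV g" and ay: "a \<le> y"
  shows "prim g y = prim g a + integral {a..y} g"
proof -
  have I: "\<And>u v w. u \<le> v \<Longrightarrow> v \<le> w \<Longrightarrow> integral {u..v} g + integral {v..w} g = integral {u..w} g"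
    by (rule Henstock_Kurzweil_Integration.integral_combine) (auto intro: integrable_continuous_real continuous_on_subset[OF g])
  have E: "integral {u..v} g = 0" if "v \<le> u" for u v
    using that by (cases "u = v") auto
  consider "0 \<le> a" | "a < 0" "0 \<le> y" | "y < 0" using ay by linarith
  then show ?thesis
  proof cases
    case 1
    then show ?thesis using I[of 0 a y] ay E[of a 0] E[of y 0] E[of 0 a] E[of 0 y] by (simp add: prim_def)
  next
    case 2
    then show ?thesis using I[of a 0 y] E[of a 0] E[of y 0] E[of 0 a] E[of 0 y] by (simp add: prim_def)
  next
    case 3
    then show ?thesis using I[of a y 0] ay E[of a 0] E[of y 0] E[of 0 a] E[of 0 y] by (simp add: prim_def)
  qed
qed

lemma prim_deriv:
  assumes g: "continuous_on UNIV g"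
  shows "(prim g has_real_derivative g x) (at x)"
proof -
  have d: "((\<lambda>y. integral {x-1..y} g) has_real_derivative g x) (at x within {x-1..x+1})"
    by (rule integral_has_real_derivative) (auto intro: continuous_on_subset[OF g])
  have "at x within {x-1..x+1} = at x"
    by (rule at_within_interior) auto
  with d have d2: "((\<lambda>y. prim g (x-1) + integral {x-1..y} g) has_real_derivative g x) (at x)"
    by (auto intro!: derivative_eq_intros)
  have eq: "prim g (x-1) + integral {x-1..y} g = prim g y" if "y \<in> {x-1<..}" for y
    using prim_shift[OF g, of "x-1" y] that by simp
  show ?thesis
    by (rule has_field_derivative_transform_within_open[OF d2, of "{x-1<..}"]) (use eq in auto)
qed

lemma oint_prim:
  assumes g: "continuous_on UNIV g"
  shows "oint a b g = prim g b - prim g a"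
  using prim_shift[OF g, of a b] prim_shift[OF g, of b a]
  by (auto simp: oint_def)

lemma integral_ftc:
  assumes "a \<le> b" "\<And>x. (G has_real_derivative g x) (at x)"
  shows "(g has_integral (G b - G a)) {a..b}"
  by (rule fundamental_theorem_of_calculus[OF assms(1)])
     (auto simp: has_real_derivative_iff_has_vector_derivative[symmetric]
           intro: has_field_derivative_at_within assms(2))

lemma periodic_int:
  assumes "\<And>t. f (t + 2*pi) = f t"
  shows "f (t + 2 * pi * of_int k) = f t"
proof -
  have n: "f (s + 2 * pi * of_nat n) = f s" for n s
    by (induction n) (auto simp: algebra_simps assms[of "s + 2 * pi * of_nat _", simplified algebra_simps])
  show ?thesis
  proof (cases "k \<ge> 0")
    case True
    then show ?thesis using n[of t "nat k"] by simp
  next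
    case False
    then show ?thesis using n[of "t + 2 * pi * of_int k" "nat (-k)"] by simp
  qed
qed

lemma periodic_reduce:
  assumes "\<And>t. f (t + 2*pi) = f t"
  shows "f t = f (t - 2 * pi * of_int \<lfloor>t/(2*pi)\<rfloor>)"
  using periodic_int[of f, OF assms, of "t - 2 * pi * of_int \<lfloor>t/(2*pi)\<rfloor>" "\<lfloor>t/(2*pi)\<rfloor>"] by simp

lemma reduce_range:
  "t - 2 * pi * of_int \<lfloor>t/(2*pi)\<rfloor> \<in> {0..<2*pi}"
proof -
  have p: "2*pi > 0" by simp
  have a: "of_int \<lfloor>t/(2*pi)\<rfloor> \<le> t/(2*pi)" "t/(2*pi) < of_int \<lfloor>t/(2*pi)\<rfloor> + 1"
    by linarith+
  have "2*pi * of_int \<lfloor>t/(2*pi)\<rfloor> \<le> 2*pi * (t/(2*pi))"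
    using a(1) p by (intro mult_left_mono) auto
  moreover have "2*pi * (t/(2*pi)) < 2*pi * (of_int \<lfloor>t/(2*pi)\<rfloor> + 1)"
    using a(2) p by (intro mult_strict_left_mono) auto
  ultimately show ?thesis using p by (auto simp: algebra_simps)
qed

lemma prim_periodic:
  assumes g: "continuous_on UNIV g" and per: "\<And>t. g (t + 2*pi) = g t"
    and z: "integral {0..2*pi} g = 0"
  shows "prim g (t + 2*pi) = prim g t"
proof -
  have "\<exists>c. \<forall>x\<in>UNIV. prim g (x + 2*pi) - prim g x = c"
    apply (rule has_field_derivative_zero_constant)
     apply simp
    apply (rule has_field_derivative_at_within)
    using DERIV_chain2[OF prim_deriv[OF g] DERIV_add[OF DERIV_ident DERIV_const[of "2*pi"]]]
      prim_deriv[OF g] per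
    by (auto intro!: derivative_eq_intros)
  then obtain c where c: "\<And>x. prim g (x + 2*pi) - prim g x = c" by auto
  have "c = prim g (0 + 2*pi) - prim g 0" using c[of 0] by simp
  also have "\<dots> = 0" using prim_shift[OF g, of 0 "2*pi"] z by simp
  finally show ?thesis using c[of t] by simp
qed




context
  fixes N :: "complex \<Rightarrow> real" and \<gamma> :: "real \<Rightarrow> complex"
  assumes nN: "is_norm N" and scN: "strictly_convex_norm N" and gam: "ccw_arclength_param N \<gamma>"
begin

lemma N_nonneg: "0 \<le> N x" using nN by (auto simp: is_norm_def)
lemma N_zero: "N 0 = 0" using nN by (auto simp: is_norm_def)
lemma N_tri: "N (x + y) \<le> N x + N y" using nN by (auto simp: is_norm_def)
lemma N_scale: "N (of_real c * x) = \<bar>c\<bar> * N x" using nN by (auto simp: is_norm_def)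
lemma N_minus: "N (- x) = N x" using N_scale[of "-1" x] by simp
lemma N_diff: "\<bar>N x - N y\<bar> \<le> N (x - y)"
  using N_tri[of "x - y" y] N_tri[of "y - x" x] N_minus[of "x - y"] by (auto simp: abs_le_iff)

definition KN where "KN = N 1 + N \<i>"

lemma KN_pos: "KN > 0"
proof -
  have "N 1 > 0" using nN by (auto simp: is_norm_def) (metis less_eq_real_def one_neq_zero)
  then show ?thesis using N_nonneg[of \<i>] by (simp add: KN_def)
qed

lemma N_le: "N x \<le> KN * cmod x"
proof -
  have "x = of_real (Re x) * 1 + of_real (Im x) * \<i>" by (simp add: complex_eq_iff)
  then have "N x \<le> N (of_real (Re x) * 1) + N (of_real (Im x) * \<i>)" using N_tri by metis
  also have "\<dots> = \<bar>Re x\<bar> * N 1 + \<bar>Im x\<bar> * N \<i>" by (simp only: N_scale)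
  also have "\<dots> \<le> cmod x * N 1 + cmod x * N \<i>"
    using N_nonneg[of 1] N_nonneg[of \<i>] abs_Re_le_cmod abs_Im_le_cmod
    by (intro add_mono mult_right_mono) auto
  finally show ?thesis by (simp add: KN_def algebra_simps)
qed

lemma N_lip: "\<bar>N x - N y\<bar> \<le> KN * cmod (x - y)"
  using N_diff N_le order_trans by blast

lemma N_cont: "continuous_on UNIV N"
proof (rule lipschitz_on_continuous_on)
  show "KN-lipschitz_on UNIV N"
    using N_lip KN_pos by (auto simp: lipschitz_on_def dist_norm)
qed

lemma N_cont_intros [continuous_intros]:
  "continuous_on S f \<Longrightarrow> continuous_on S (\<lambda>x. N (f x))"
  using continuous_on_compose2[OF N_cont] by auto

lemma N_comb: "N (of_real a * u + of_real b * v) \<le> \<bar>a\<bar> * N u + \<bar>b\<bar> * N v"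
  using N_tri[of "of_real a * u" "of_real b * v"] by (simp only: N_scale)

lemma N_strict:
  assumes "N u = 1" "N v = 1" "u \<noteq> v" "0 < th" "th < 1"
  shows "N (of_real (1 - th) * u + of_real th * v) < 1"
proof -
  have m: "N ((u + v) / 2) < 1" using scN assms by (auto simp: strictly_convex_norm_def)
  show ?thesis
  proof (cases "th \<le> 1/2")
    case True
    have eq: "of_real (1 - th) * u + of_real th * v = of_real (1 - 2*th) * u + of_real (2*th) * ((u + v) / 2)"
      by (simp add: field_simps)
    have "2*th * N ((u + v) / 2) < 2*th * 1" using m assms by (intro mult_strict_left_mono) auto
    moreover have "N (of_real (1 - th) * u + of_real th * v) \<le> \<bar>1 - 2*th\<bar> * N u + \<bar>2*th\<bar> * N ((u + v) / 2)"
      unfolding eq by (rule N_comb)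
    moreover have "\<bar>1 - 2*th\<bar> = 1 - 2*th" "\<bar>2*th\<bar> = 2*th" using True assms by auto
    ultimately show ?thesis using assms(1) by simp
  next
    case False
    have eq: "of_real (1 - th) * u + of_real th * v = of_real (2 - 2*th) * ((u + v) / 2) + of_real (2*th - 1) * v"
      by (simp add: field_simps)
    have "(2 - 2*th) * N ((u + v) / 2) < (2 - 2*th) * 1" using m assms by (intro mult_strict_left_mono) auto
    moreover have "N (of_real (1 - th) * u + of_real th * v) \<le> \<bar>2 - 2*th\<bar> * N ((u + v) / 2) + \<bar>2*th - 1\<bar> * N v"
      unfolding eq by (rule N_comb)
    moreover have "\<bar>2 - 2*th\<bar> = 2 - 2*th" "\<bar>2*th - 1\<bar> = 2*th - 1" using False assms by auto
    ultimately show ?thesis using assms(2) by simp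
  qed
qed

lemma no_three_sorted:
  assumes "d \<noteq> 0" "r1 < r2" "r2 < r3"
    and "N (y + of_real r1 * d) = 1" "N (y + of_real r2 * d) = 1" "N (y + of_real r3 * d) = 1"
  shows False
proof -
  define th where "th = (r2 - r1) / (r3 - r1)"
  have th: "0 < th" "th < 1" using assms by (auto simp: th_def field_simps)
  have ne: "y + of_real r1 * d \<noteq> y + of_real r3 * d" using assms by auto
  have "of_real (1 - th) * (y + of_real r1 * d) + of_real th * (y + of_real r3 * d) = y + of_real r2 * d"
  proof -
    have "th * (r3 - r1) = r2 - r1" using assms by (simp add: th_def)
    then have "(1 - th) * r1 + th * r3 = r2" by (simp add: algebra_simps)
    then have "of_real ((1 - th) * r1 + th * r3) * d = of_real r2 * d" by simp
    then show ?thesis by (simp add: algebra_simps)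
  qed
  then show False using N_strict[OF assms(4) assms(6) ne th] assms(5) by simp
qed

lemma no_three_distinct:
  assumes "d \<noteq> 0" "a \<noteq> b" "b \<noteq> c" "a \<noteq> c"
    and "N (y + of_real a * d) = 1" "N (y + of_real b * d) = 1" "N (y + of_real c * d) = 1"
  shows False
proof -
  consider "a < b" "b < c" | "a < c" "c < b" | "b < a" "a < c" | "b < c" "c < a" | "c < a" "a < b" | "c < b" "b < a"
    using assms by linarith
  then show False
  proof cases
    case 1 then show ?thesis using no_three_sorted[OF assms(1) 1, of y] assms(5-7) by blast
  next
    case 2 then show ?thesis using no_three_sorted[OF assms(1) 2, of y] assms(5-7) by blast
  next
    case 3 then show ?thesis using no_three_sorted[OF assms(1) 3, of y] assms(5-7) by blast
  next
    case 4 then show ?thesis using no_three_sorted[OF assms(1) 4, of y] assms(5-7) by blast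
  next
    case 5 then show ?thesis using no_three_sorted[OF assms(1) 5, of y] assms(5-7) by blast
  next
    case 6 then show ?thesis using no_three_sorted[OF assms(1) 6, of y] assms(5-7) by blast
  qed
qed

lemma perp_param:
  assumes "b \<noteq> 0" "v \<bullet> b = 0"
  shows "v = of_real ((v \<bullet> (\<i> * b)) / (cmod b)\<^sup>2) * (\<i> * b)"
proof -
  have n: "(cmod b)\<^sup>2 = (Re b)\<^sup>2 + (Im b)\<^sup>2" by (simp add: cmod_def)
  have nz: "(Re b)\<^sup>2 + (Im b)\<^sup>2 \<noteq> 0" using assms(1) by (simp add: complex_eq_iff)
  have o: "Re v * Re b + Im v * Im b = 0" using assms(2) by (simp add: inner_complex_def)
  define c where "c = Re b"
  define e where "e = Im b"
  define v1 where "v1 = Re v"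
  define v2 where "v2 = Im v"
  have o': "v1 * c + v2 * e = 0" using o by (simp add: c_def e_def v1_def v2_def)
  have nz': "c\<^sup>2 + e\<^sup>2 \<noteq> 0" using nz by (simp add: c_def e_def)
  have s: "v \<bullet> (\<i> * b) = v2 * c - v1 * e" by (simp add: inner_complex_def c_def e_def v1_def v2_def)
  have r1: "v1 * (c\<^sup>2 + e\<^sup>2) = (v2 * c - v1 * e) * (- e)"
  proof -
    have "v1 * (c\<^sup>2 + e\<^sup>2) - (v2 * c - v1 * e) * (- e) = c * (v1 * c + v2 * e)"
      by (simp add: algebra_simps power2_eq_square)
    then show ?thesis using o' by simp
  qed
  have r2: "v2 * (c\<^sup>2 + e\<^sup>2) = (v2 * c - v1 * e) * c"
  proof -
    have "v2 * (c\<^sup>2 + e\<^sup>2) - (v2 * c - v1 * e) * c = e * (v1 * c + v2 * e)"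
      by (simp add: algebra_simps power2_eq_square)
    then show ?thesis using o' by simp
  qed
  have "v1 = (v2 * c - v1 * e) / (c\<^sup>2 + e\<^sup>2) * (- e)"
    using r1 nz' by (simp add: field_simps)
  moreover have "v2 = (v2 * c - v1 * e) / (c\<^sup>2 + e\<^sup>2) * c"
    using r2 nz' by (simp add: field_simps)
  ultimately show ?thesis unfolding n s
    by (simp add: complex_eq_iff c_def e_def v1_def v2_def)
qed

lemma no_three_line:
  assumes "N x = 1" "N y = 1" "N z = 1" "x \<noteq> y" "y \<noteq> z" "x \<noteq> z"
    and "b0 + b1 \<bullet> x = 0" "b0 + b1 \<bullet> y = 0" "b0 + b1 \<bullet> z = 0" and "b1 \<noteq> 0"
  shows False
proof -
  define d where "d = \<i> * b1"
  have d: "d \<noteq> 0" using assms by (simp add: d_def)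
  have "b1 \<bullet> (x - y) = 0" "b1 \<bullet> (z - y) = 0" using assms(7-9) by (auto simp: inner_diff_right)
  then have px: "(x - y) \<bullet> b1 = 0" and pz: "(z - y) \<bullet> b1 = 0" by (auto simp: inner_commute)
  obtain s1 where s1: "x - y = of_real s1 * d" using perp_param[OF assms(10) px] d_def by blast
  obtain s2 where s2: "z - y = of_real s2 * d" using perp_param[OF assms(10) pz] d_def by blast
  have x: "x = y + of_real s1 * d" and z: "z = y + of_real s2 * d" using s1 s2 by (auto simp: algebra_simps)
  have "s1 \<noteq> 0" using assms(4) x by auto
  moreover have "s2 \<noteq> 0" using assms(5) z by auto
  moreover have "s1 \<noteq> s2" using assms(6) x z by auto
  ultimately show False
    using no_three_distinct[OF d, of s1 0 s2 y] assms(1-3) x z by auto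
qed

abbreviation dg where "dg t \<equiv> vector_derivative \<gamma> (at t)"

lemma g_per: "\<gamma> (t + 2*pi) = \<gamma> t" using gam by (simp add: ccw_arclength_param_def)
lemma g_der: "(\<gamma> has_vector_derivative dg t) (at t)" using gam by (simp add: ccw_arclength_param_def)
lemma dg_cont: "continuous_on UNIV dg" using gam by (simp add: ccw_arclength_param_def)
lemma dg_norm: "cmod (dg t) = 1" using gam by (simp add: ccw_arclength_param_def)
lemma g_cont: "continuous_on UNIV \<gamma>"
  by (rule continuous_at_imp_continuous_on) (use g_der has_vector_derivative_continuous in blast)

lemma g_cont_intros [continuous_intros]:
  "continuous_on S f \<Longrightarrow> continuous_on S (\<lambda>x. \<gamma> (f x))"
  "continuous_on S f \<Longrightarrow> continuous_on S (\<lambda>x. dg (f x))"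
  using continuous_on_compose2[OF g_cont] continuous_on_compose2[OF dg_cont] by auto

lemma dg_per: "dg (t + 2*pi) = dg t"
proof -
  have "((\<gamma> \<circ> (\<lambda>s. s + 2*pi)) has_vector_derivative (1 *\<^sub>R dg (t + 2*pi))) (at t)"
    by (rule vector_diff_chain_at) (auto intro!: derivative_eq_intros g_der)
  moreover have "\<gamma> \<circ> (\<lambda>s. s + 2*pi) = \<gamma>" by (auto simp: g_per)
  ultimately show ?thesis using vector_derivative_at by fastforce
qed

lemma g_N: "N (\<gamma> t) = 1"
proof -
  define t' where "t' = t - 2 * pi * of_int \<lfloor>t/(2*pi)\<rfloor>"
  have "\<gamma> t = \<gamma> t'" unfolding t'_def by (rule periodic_reduce) (rule g_per)
  moreover have "t' \<in> {0..<2*pi}" unfolding t'_def by (rule reduce_range)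
  ultimately have fr: "\<gamma> t \<in> frontier (unitball N)" using gam by (auto simp: ccw_arclength_param_def)
  have op: "open (unitball N)" unfolding unitball_def
    by (rule open_Collect_less) (auto intro: N_cont)
  have cl: "closure (unitball N) \<subseteq> {z. N z \<le> 1}"
    by (rule closure_minimal) (auto simp: unitball_def intro!: closed_Collect_le N_cont)
  show ?thesis using fr cl interior_open[OF op] by (auto simp: frontier_def unitball_def)
qed

lemma g_bound: obtains R where "R > 0" "\<And>t. cmod (\<gamma> t) \<le> R"
proof -
  have "compact (\<gamma> ` {0..2*pi})"
    by (rule compact_continuous_image) (auto intro: continuous_on_subset[OF g_cont])
  then obtain a where a: "\<And>x. x \<in> \<gamma> ` {0..2*pi} \<Longrightarrow> cmod x \<le> a"
    using compact_imp_bounded bounded_iff by metis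
  have ca: "cmod (\<gamma> t) \<le> a" for t
  proof -
    define t' where "t' = t - 2 * pi * of_int \<lfloor>t/(2*pi)\<rfloor>"
    have "\<gamma> t = \<gamma> t'" unfolding t'_def by (rule periodic_reduce) (rule g_per)
    moreover have "t' \<in> {0..<2*pi}" unfolding t'_def by (rule reduce_range)
    ultimately show ?thesis using a by auto
  qed
  show ?thesis
  proof (rule that[of "max a 1"])
    show "cmod (\<gamma> t) \<le> max a 1" for t using ca[of t] by linarith
  qed simp
qed

lemma g_inj:
  assumes "\<gamma> s = \<gamma> t"
  shows "\<exists>k::int. s = t + 2 * pi * of_int k"
proof -
  define s' where "s' = s - 2 * pi * of_int \<lfloor>s/(2*pi)\<rfloor>"
  define t' where "t' = t - 2 * pi * of_int \<lfloor>t/(2*pi)\<rfloor>"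
  have "\<gamma> s = \<gamma> s'" unfolding s'_def by (rule periodic_reduce) (rule g_per)
  moreover have "\<gamma> t = \<gamma> t'" unfolding t'_def by (rule periodic_reduce) (rule g_per)
  moreover have "s' \<in> {0..<2*pi}" "t' \<in> {0..<2*pi}" unfolding s'_def t'_def by (rule reduce_range)+
  moreover have "inj_on \<gamma> {0..<2*pi}" using gam by (simp add: ccw_arclength_param_def)
  ultimately have "s' = t'" using assms by (auto simp: inj_on_def)
  then have "s = t + 2 * pi * of_int (\<lfloor>s/(2*pi)\<rfloor> - \<lfloor>t/(2*pi)\<rfloor>)"
    unfolding s'_def t'_def by (simp add: algebra_simps)
  then show ?thesis by blast
qed

lemma g_ne_small:
  assumes "s \<noteq> t" "\<bar>s - t\<bar> < 2*pi"
  shows "\<gamma> s \<noteq> \<gamma> t"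
proof
  assume "\<gamma> s = \<gamma> t"
  then obtain k :: int where k: "s = t + 2 * pi * of_int k" using g_inj by blast
  have "k \<noteq> 0" using k assms by auto
  then have "1 \<le> \<bar>of_int k :: real\<bar>" by linarith
  then have "2 * pi * 1 \<le> 2 * pi * \<bar>of_int k\<bar>" by (intro mult_left_mono) auto
  then show False using k assms by (simp add: abs_mult)
qed

definition phi :: "real \<Rightarrow> real \<Rightarrow> real" where
  "phi c t = max 0 (cos (t - c) - cos (pi/4))"

definition Pb :: "real \<times> complex \<Rightarrow> complex \<Rightarrow> real" where
  "Pb b z = fst b + snd b \<bullet> z"

definition Mg :: "real \<Rightarrow> real \<times> complex \<Rightarrow> real \<times> complex" where
  "Mg c b = (integral {0..2*pi} (\<lambda>t. phi c t * Pb b (\<gamma> t)),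
             integral {0..2*pi} (\<lambda>t. (phi c t * Pb b (\<gamma> t)) *\<^sub>R \<gamma> t))"

lemma phi_cont [continuous_intros]: "continuous_on S (\<lambda>t. phi c t)"
  unfolding phi_def by (intro continuous_intros)

lemma phi_nonneg: "0 \<le> phi c t" by (simp add: phi_def)
lemma phi_le1: "phi c t \<le> 1"
proof -
  have "0 < cos (pi/4)" by (simp add: cos_45)
  moreover have "cos (t - c) \<le> 1" by simp
  ultimately have "cos (t - c) - cos (pi/4) \<le> 1" by linarith
  then show ?thesis by (simp add: phi_def)
qed

lemma phi_per: "phi c (t + 2*pi) = phi c t"
proof -
  have "t + 2*pi - c = (t - c) + 2*pi" by simp
  then show ?thesis by (simp only: phi_def cos_periodic)
qed

lemma phi_shift: "phi (c + 2 * pi * of_int k) = phi c"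
proof
  fix t
  have "cos (t - (c + 2 * pi * of_int k)) = cos ((t - c) + 2 * pi * of_int (-k))" by (simp add: algebra_simps)
  also have "\<dots> = cos (t - c)" using periodic_int[of cos, of "t - c" "-k"] by simp
  finally show "phi (c + 2 * pi * of_int k) t = phi c t" by (simp add: phi_def)
qed

lemma phi_pos:
  assumes "\<bar>x\<bar> < pi/4"
  shows "0 < phi c (c + x)"
proof -
  have "cos (pi/4) < cos \<bar>x\<bar>" by (rule cos_monotone_0_pi) (use assms in auto)
  then show ?thesis by (simp add: phi_def)
qed

lemma Pb_add: "Pb (b + b') z = Pb b z + Pb b' z" by (simp add: Pb_def inner_add_left)
lemma Pb_scale: "Pb (r *\<^sub>R b) z = r * Pb b z" by (simp add: Pb_def algebra_simps)

lemma Pb_cont [continuous_intros]: "continuous_on S f \<Longrightarrow> continuous_on S (\<lambda>t. Pb b (f t))"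
  unfolding Pb_def by (intro continuous_intros)

lemma int_cont:
  fixes f :: "real \<Rightarrow> 'a::banach"
  shows "continuous_on UNIV f \<Longrightarrow> f integrable_on {a..b}"
  by (rule integrable_continuous_real) (auto intro: continuous_on_subset)

lemma Mg_linear: "linear (Mg c)"
proof (rule linearI)
  fix b b' :: "real \<times> complex"
  have i1: "(\<lambda>t. phi c t * Pb b (\<gamma> t)) integrable_on {0..2*pi}" for b
    by (rule int_cont) (intro continuous_intros)
  have i2: "(\<lambda>t. (phi c t * Pb b (\<gamma> t)) *\<^sub>R \<gamma> t) integrable_on {0..2*pi}" for b
    by (rule int_cont) (intro continuous_intros)
  show "Mg c (b + b') = Mg c b + Mg c b'"
    unfolding Mg_def using integral_add[OF i1[of b] i1[of b']] integral_add[OF i2[of b] i2[of b']]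
    by (simp add: Pb_add algebra_simps scaleR_add_left)
next
  fix r :: real and b :: "real \<times> complex"
  have a: "(\<lambda>t. phi c t * Pb (r *\<^sub>R b) (\<gamma> t)) = (\<lambda>t. r * (phi c t * Pb b (\<gamma> t)))"
    by (simp add: Pb_scale algebra_simps)
  have b: "(\<lambda>t. (phi c t * Pb (r *\<^sub>R b) (\<gamma> t)) *\<^sub>R \<gamma> t) = (\<lambda>t. r *\<^sub>R ((phi c t * Pb b (\<gamma> t)) *\<^sub>R \<gamma> t))"
    by (simp add: Pb_scale algebra_simps)
  have c1: "integral {0..2*pi} (\<lambda>t. phi c t * Pb (r *\<^sub>R b) (\<gamma> t)) = r * integral {0..2*pi} (\<lambda>t. phi c t * Pb b (\<gamma> t))"
    unfolding a by (rule integral_mult_right)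
  have c2: "integral {0..2*pi} (\<lambda>t. (phi c t * Pb (r *\<^sub>R b) (\<gamma> t)) *\<^sub>R \<gamma> t) = r *\<^sub>R integral {0..2*pi} (\<lambda>t. (phi c t * Pb b (\<gamma> t)) *\<^sub>R \<gamma> t)"
    unfolding b by (rule integral_cmul)
  show "Mg c (r *\<^sub>R b) = r *\<^sub>R Mg c b"
    unfolding Mg_def c1 c2 by simp
qed

lemma Mg_inj0:
  assumes "Mg c b = 0"
  shows "b = 0"
proof -
  define h where "h t = phi c t * (Pb b (\<gamma> t))\<^sup>2" for t
  have i1: "(\<lambda>t. phi c t * Pb b (\<gamma> t)) integrable_on {0..2*pi}"
    by (rule int_cont) (intro continuous_intros)
  have i2: "(\<lambda>t. (phi c t * Pb b (\<gamma> t)) *\<^sub>R \<gamma> t) integrable_on {0..2*pi}"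
    by (rule int_cont) (intro continuous_intros)
  have z1: "integral {0..2*pi} (\<lambda>t. phi c t * Pb b (\<gamma> t)) = 0"
   and z2: "integral {0..2*pi} (\<lambda>t. (phi c t * Pb b (\<gamma> t)) *\<^sub>R \<gamma> t) = 0"
    using assms by (auto simp: Mg_def prod_eq_iff)
  have e1: "integral {0..2*pi} (\<lambda>t. fst b * (phi c t * Pb b (\<gamma> t))) = 0"
    using z1 by simp
  have e2: "integral {0..2*pi} ((\<lambda>x. snd b \<bullet> x) \<circ> (\<lambda>t. (phi c t * Pb b (\<gamma> t)) *\<^sub>R \<gamma> t)) = 0"
    using integral_linear[OF i2 bounded_linear_inner_right[of "snd b"]] z2 by simp
  have "integral {0..2*pi} h = integral {0..2*pi} (\<lambda>t. fst b * (phi c t * Pb b (\<gamma> t)))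
      + integral {0..2*pi} ((\<lambda>x. snd b \<bullet> x) \<circ> (\<lambda>t. (phi c t * Pb b (\<gamma> t)) *\<^sub>R \<gamma> t))"
    apply (subst integral_add[symmetric])
      apply (rule int_cont, intro continuous_intros)
     apply (rule int_cont, unfold o_def, intro continuous_intros)
    apply (rule integral_cong)
    apply (simp add: h_def Pb_def power2_eq_square algebra_simps)
    done
  then have hI: "integral {0..2*pi} h = 0" using e1 e2 by simp
  have hint: "h integrable_on {0..2*pi}" unfolding h_def by (rule int_cont) (intro continuous_intros)
  have hi: "(h has_integral 0) (cbox 0 (2*pi))"
    using integrable_integral[OF hint] hI by simp
  have hc: "continuous_on (cbox 0 (2*pi)) h" unfolding h_def by (intro continuous_intros)
  have hz: "h t = 0" if "t \<in> {0..2*pi}" for t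
  proof (rule has_integral_0_cbox_imp_0[OF hc _ hi])
    show "0 \<le> h x" for x by (simp add: h_def phi_nonneg)
    show "box 0 (2*pi) \<noteq> {}" by (simp add: not_le)
    show "t \<in> cbox 0 (2*pi)" using that by simp
  qed
  have hper: "h (t + 2*pi) = h t" for t by (simp add: h_def phi_per g_per)
  have hall: "h t = 0" for t
  proof -
    have "h t = h (t - 2 * pi * of_int \<lfloor>t/(2*pi)\<rfloor>)" by (rule periodic_reduce) (rule hper)
    also have "\<dots> = 0" using reduce_range[of t] by (intro hz) auto
    finally show ?thesis .
  qed
  have P0: "Pb b (\<gamma> (c + x)) = 0" if "\<bar>x\<bar> < pi/4" for x
    using hall[of "c + x"] phi_pos[OF that, of c] by (simp add: h_def)
  have pi8: "\<bar>pi/8\<bar> < pi/4" "\<bar>-pi/8\<bar> < pi/4" "\<bar>0::real\<bar> < pi/4" by auto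
  have d1: "\<gamma> (c + pi/8) \<noteq> \<gamma> (c + 0)" by (rule g_ne_small) auto
  have d2: "\<gamma> (c + 0) \<noteq> \<gamma> (c + - pi/8)" by (rule g_ne_small) auto
  have d3: "\<gamma> (c + pi/8) \<noteq> \<gamma> (c + - pi/8)" by (rule g_ne_small) auto
  have "snd b = 0"
  proof (rule ccontr)
    assume "snd b \<noteq> 0"
    then show False
      using no_three_line[OF g_N g_N g_N d1 d2 d3, of "fst b" "snd b"]
        P0[OF pi8(1)] P0[OF pi8(2)] P0[OF pi8(3)] by (simp add: Pb_def)
  qed
  moreover have "fst b = 0" using P0[OF pi8(3)] \<open>snd b = 0\<close> by (simp add: Pb_def)
  ultimately show ?thesis by (simp add: prod_eq_iff)
qed

lemma Mg_inv:
  obtains B where "B > 0" "\<And>y. \<exists>b. Mg c b = y \<and> norm b \<le> B * norm y"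
proof -
  have lin: "linear (Mg c)" by (rule Mg_linear)
  have inj: "inj (Mg c)"
    using linear_injective_0[OF lin] Mg_inj0 by blast
  obtain g where g: "linear g" "\<And>x. Mg c (g x) = x"
    using linear_injective_isomorphism[OF lin inj] by blast
  obtain B where B: "B > 0" "\<And>x. norm (g x) \<le> B * norm x"
    using linear_bounded_pos[OF g(1)] by blast
  show ?thesis using that[OF B(1)] g(2) B(2) by blast
qed

lemma Mg_unif:
  obtains B where "B > 0" "\<And>k y. \<exists>b. Mg (of_int k * pi / 4) b = y \<and> norm b \<le> B * norm y"
proof -
  have "\<forall>k\<in>{0..<8::int}. \<exists>B. B > 0 \<and> (\<forall>y. \<exists>b. Mg (of_int k * pi / 4) b = y \<and> norm b \<le> B * norm y)"
  proof
    fix k :: int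
    obtain B where "B > 0" "\<And>y. \<exists>b. Mg (of_int k * pi / 4) b = y \<and> norm b \<le> B * norm y"
      using Mg_inv by blast
    then show "\<exists>B. B > 0 \<and> (\<forall>y. \<exists>b. Mg (of_int k * pi / 4) b = y \<and> norm b \<le> B * norm y)" by blast
  qed
  then obtain Bf where Bf: "\<And>k. k \<in> {0..<8::int} \<Longrightarrow> Bf k > 0 \<and> (\<forall>y. \<exists>b. Mg (of_int k * pi / 4) b = y \<and> norm b \<le> Bf k * norm y)"
    by metis
  define B where "B = (\<Sum>k\<in>{0..<8::int}. Bf k)"
  have Bge: "Bf k \<le> B" if "k \<in> {0..<8}" for k
    unfolding B_def by (rule member_le_sum) (use that Bf in \<open>auto intro: less_imp_le\<close>)
  have Bpos: "B > 0" using Bge[of 0] Bf[of 0] by auto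
  show ?thesis
  proof (rule that[OF Bpos])
    fix k :: int and y
    define k' where "k' = k mod 8"
    have k': "k' \<in> {0..<8}" by (simp add: k'_def)
    have kk: "of_int k * pi / 4 = of_int k' * pi / 4 + 2 * pi * of_int (k div 8)"
    proof -
      have "k = k' + 8 * (k div 8)" by (simp add: k'_def)
      then have "(of_int k :: real) = of_int k' + 8 * of_int (k div 8)" by (metis of_int_add of_int_mult of_int_numeral)
      then show ?thesis by (simp add: field_simps)
    qed
    have "Mg (of_int k * pi / 4) = Mg (of_int k' * pi / 4)"
      unfolding kk Mg_def phi_shift ..
    moreover obtain b where "Mg (of_int k' * pi / 4) b = y" "norm b \<le> Bf k' * norm y" using Bf[OF k'] by blast
    moreover have "Bf k' * norm y \<le> B * norm y" using Bge[OF k'] by (intro mult_right_mono) auto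
    ultimately show "\<exists>b. Mg (of_int k * pi / 4) b = y \<and> norm b \<le> B * norm y"
      by (metis order_trans)
  qed
qed

lemma phi_zero_window:
  assumes "-3*pi/2 < t - c" "t - c \<le> -pi/4"
  shows "phi c t = 0"
proof -
  define x where "x = t - c"
  have "cos x \<le> cos (pi/4)"
  proof (cases "x \<ge> -pi")
    case True
    have "cos (-x) \<le> cos (pi/4)" by (rule cos_monotone_0_pi_le) (use True assms x_def in auto)
    then show ?thesis by simp
  next
    case False
    have "0 < cos (x + pi)" by (rule cos_gt_zero_pi) (use False assms x_def in auto)
    then have "cos x < 0" by simp
    moreover have "0 < cos (pi/4)" by (simp add: cos_45)
    ultimately show ?thesis by simp
  qed
  then show ?thesis by (simp add: phi_def x_def)
qed

lemma by_parts0: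
  fixes lam mu p p' :: "real \<Rightarrow> real"
  assumes ab: "a \<le> b" and dl: "\<And>t. (lam has_real_derivative mu t) (at t)"
    and dp: "\<And>t. (p has_real_derivative p' t) (at t)"
    and cm: "continuous_on UNIV mu" and cp: "continuous_on UNIV p'"
    and pa: "p a = 0" and pb: "p b = 0"
  shows "integral {a..b} (\<lambda>t. lam t * p' t) = - integral {a..b} (\<lambda>t. mu t * p t)"
proof -
  have cl: "continuous_on UNIV lam"
    by (rule continuous_at_imp_continuous_on) (use dl DERIV_continuous in blast)
  have cpp: "continuous_on UNIV p"
    by (rule continuous_at_imp_continuous_on) (use dp DERIV_continuous in blast)
  have "((\<lambda>t. mu t * p t + lam t * p' t) has_integral (lam b * p b - lam a * p a)) {a..b}"
    by (rule integral_ftc[OF ab]) (auto intro!: derivative_eq_intros dl dp)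
  then have "integral {a..b} (\<lambda>t. mu t * p t + lam t * p' t) = 0" using pa pb by (simp add: integral_unique)
  moreover have "integral {a..b} (\<lambda>t. mu t * p t + lam t * p' t) = integral {a..b} (\<lambda>t. mu t * p t) + integral {a..b} (\<lambda>t. lam t * p' t)"
    by (rule integral_add) (rule int_cont, intro continuous_intros cl cm cp cpp)+
  ultimately show ?thesis by simp
qed

lemma dinner: "((\<lambda>t. (\<gamma> t - z) \<bullet> v) has_real_derivative (dg t \<bullet> v)) (at t)"
proof -
  have "((\<lambda>t. (\<gamma> t - z) \<bullet> v) has_derivative (\<lambda>h. (h *\<^sub>R dg t) \<bullet> v)) (at t)"
    using g_der[of t] unfolding has_vector_derivative_def by (auto intro!: derivative_eq_intros)
  moreover have "(\<lambda>h. (h *\<^sub>R dg t) \<bullet> v) = (*) (dg t \<bullet> v)" by (auto simp: mult.commute)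
  ultimately show ?thesis unfolding has_field_derivative_def by simp
qed

lemma construct:
  obtains eps where "eps > 0"
    "\<And>v zm al be sg de. al < be \<Longrightarrow> be \<le> al + pi \<Longrightarrow> (\<gamma> al - zm) \<bullet> v = 0 \<Longrightarrow> (\<gamma> be - zm) \<bullet> v = 0
      \<Longrightarrow> \<bar>sg\<bar> = 1 \<Longrightarrow> de > 0 \<Longrightarrow>
      \<exists>lam \<in> Lambda_star \<gamma>. integral {al..be} (\<lambda>t. lam t * (dg t \<bullet> v))
          = sg * eps * integral {al..be} (\<lambda>t. ((\<gamma> t - zm) \<bullet> v)\<^sup>2 / (\<bar>(\<gamma> t - zm) \<bullet> v\<bar> + de))"
proof -
  obtain R where R: "R > 0" "\<And>t. cmod (\<gamma> t) \<le> R" using g_bound by blast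
  obtain B where B: "B > 0" "\<And>k y. \<exists>b. Mg (of_int k * pi / 4) b = y \<and> norm b \<le> B * norm y"
    using Mg_unif by blast
  define eps where "eps = 1 / (1 + B * (2*pi) * (1 + R)\<^sup>2)"
  have den: "1 + B * (2*pi) * (1 + R)\<^sup>2 > 0" using B R by (simp add: add_pos_nonneg)
  have eps: "eps > 0" using den by (simp add: eps_def)
  have epsid: "eps * (1 + B * (2*pi) * (1 + R)\<^sup>2) = 1" using den by (simp add: eps_def)
  show ?thesis
  proof (rule that[OF eps])
    fix v zm :: complex and al be sg de :: real
    assume ab: "al < be" "be \<le> al + pi" and pa: "(\<gamma> al - zm) \<bullet> v = 0" and pb: "(\<gamma> be - zm) \<bullet> v = 0"
      and sg: "\<bar>sg\<bar> = 1" and de: "de > 0"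
    define p where "p t = (\<gamma> t - zm) \<bullet> v" for t
    define w where "w t = p t / (\<bar>p t\<bar> + de)" for t
    have cp: "continuous_on UNIV p" unfolding p_def by (intro continuous_intros)
    have cw: "continuous_on UNIV w" unfolding w_def
      by (intro continuous_intros cp) (use de in \<open>auto simp: add_pos_nonneg\<close>)
    have w1: "\<bar>w t\<bar> \<le> 1" for t
      using de by (auto simp: w_def abs_divide divide_le_eq_1)
    have wper: "w (t + 2*pi) = w t" for t by (simp add: w_def p_def g_per)
    define Iw where "Iw = integral {0..2*pi} w"
    define Iwg where "Iwg = integral {0..2*pi} (\<lambda>t. w t *\<^sub>R \<gamma> t)"
    have iw: "w integrable_on {0..2*pi}" by (rule int_cont[OF cw])
    have iwg: "(\<lambda>t. w t *\<^sub>R \<gamma> t) integrable_on {0..2*pi}" by (rule int_cont) (intro continuous_intros cw)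
    have bIw: "\<bar>Iw\<bar> \<le> 2*pi"
    proof -
      have "norm Iw \<le> 1 * Henstock_Kurzweil_Integration.content {0..2*pi}"
        unfolding Iw_def by (rule has_integral_bound_real[OF _ finite.emptyI integrable_integral[OF iw]]) (use w1 in auto)
      then show ?thesis by simp
    qed
    have bIwg: "norm Iwg \<le> R * (2*pi)"
    proof -
      have "norm Iwg \<le> R * Henstock_Kurzweil_Integration.content {0..2*pi}"
        unfolding Iwg_def
      proof (rule has_integral_bound_real[OF _ finite.emptyI integrable_integral[OF iwg]])
        show "0 \<le> R" using R by simp
        fix x show "norm (w x *\<^sub>R \<gamma> x) \<le> R"
          using mult_mono[OF w1[of x] R(2)[of x]] by simp
      qed
      then show ?thesis by simp
    qed
    define y where "y = (sg * eps * Iw, (sg * eps) *\<^sub>R Iwg)"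
    have ny: "norm y \<le> eps * (2*pi) * (1 + R)"
    proof -
      have "norm y \<le> norm (sg * eps * Iw) + norm ((sg * eps) *\<^sub>R Iwg)" unfolding y_def by (rule norm_Pair_le)
      also have "\<dots> = eps * \<bar>Iw\<bar> + eps * norm Iwg" using sg eps by (simp add: abs_mult)
      also have "\<dots> \<le> eps * (2*pi) + eps * (R * (2*pi))"
        using bIw bIwg eps by (intro add_mono mult_left_mono) auto
      finally show ?thesis by (simp add: algebra_simps)
    qed
    define k where "k = \<lceil>(be + pi/4) / (pi/4)\<rceil>"
    define c where "c = of_int k * pi / 4"
    have c1: "be + pi/4 \<le> c"
    proof -
      have "(be + pi/4) / (pi/4) \<le> of_int k" unfolding k_def by simp
      then show ?thesis unfolding c_def by (simp add: field_simps)
    qed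
    have c2: "c < be + pi/2"
    proof -
      have "of_int k < (be + pi/4) / (pi/4) + 1" unfolding k_def using ceiling_correct by (metis diff_less_eq)
      then show ?thesis unfolding c_def by (simp add: field_simps)
    qed
    obtain b where b: "Mg c b = y" "norm b \<le> B * norm y" using B(2)[of k y] unfolding c_def by blast
    define mu where "mu t = - (sg * eps) * w t + phi c t * Pb b (\<gamma> t)" for t
    have cmu: "continuous_on UNIV mu" unfolding mu_def by (intro continuous_intros cw)
    have muper: "mu (t + 2*pi) = mu t" for t by (simp add: mu_def wper phi_per g_per)
    have i1: "(\<lambda>t. phi c t * Pb b (\<gamma> t)) integrable_on {0..2*pi}" by (rule int_cont) (intro continuous_intros)
    have i2: "(\<lambda>t. (phi c t * Pb b (\<gamma> t)) *\<^sub>R \<gamma> t) integrable_on {0..2*pi}" by (rule int_cont) (intro continuous_intros)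
    have Mgb1: "integral {0..2*pi} (\<lambda>t. phi c t * Pb b (\<gamma> t)) = sg * eps * Iw"
      and Mgb2: "integral {0..2*pi} (\<lambda>t. (phi c t * Pb b (\<gamma> t)) *\<^sub>R \<gamma> t) = (sg * eps) *\<^sub>R Iwg"
      using b(1) by (auto simp: Mg_def y_def)
    have int0: "integral {0..2*pi} mu = 0"
    proof -
      have "integral {0..2*pi} mu = integral {0..2*pi} (\<lambda>t. - (sg * eps) * w t) + integral {0..2*pi} (\<lambda>t. phi c t * Pb b (\<gamma> t))"
        unfolding mu_def by (rule integral_add) (rule int_cont, intro continuous_intros cw)+
      also have "\<dots> = 0" using Mgb1 by (simp add: Iw_def)
      finally show ?thesis .
    qed
    have intg0: "((\<lambda>t. mu t *\<^sub>R \<gamma> t) has_integral 0) {0..2*pi}"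
    proof -
      have eq: "(\<lambda>t. mu t *\<^sub>R \<gamma> t) = (\<lambda>t. (- (sg * eps)) *\<^sub>R (w t *\<^sub>R \<gamma> t) + (phi c t * Pb b (\<gamma> t)) *\<^sub>R \<gamma> t)"
        by (auto simp: mu_def algebra_simps)
      have h1: "((\<lambda>t. w t *\<^sub>R \<gamma> t) has_integral Iwg) {0..2*pi}"
        unfolding Iwg_def by (rule integrable_integral[OF iwg])
      have h2: "((\<lambda>t. (- (sg * eps)) *\<^sub>R (w t *\<^sub>R \<gamma> t)) has_integral (- (sg * eps)) *\<^sub>R Iwg) {0..2*pi}"
        by (rule has_integral_cmul[OF h1])
      have h3: "((\<lambda>t. (phi c t * Pb b (\<gamma> t)) *\<^sub>R \<gamma> t) has_integral (sg * eps) *\<^sub>R Iwg) {0..2*pi}"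
        using integrable_integral[OF i2] unfolding Mgb2 .
      have "((\<lambda>t. (- (sg * eps)) *\<^sub>R (w t *\<^sub>R \<gamma> t) + (phi c t * Pb b (\<gamma> t)) *\<^sub>R \<gamma> t) has_integral
             ((- (sg * eps)) *\<^sub>R Iwg + (sg * eps) *\<^sub>R Iwg)) {0..2*pi}"
        by (rule has_integral_add[OF h2 h3])
      moreover have "(- (sg * eps)) *\<^sub>R Iwg + (sg * eps) *\<^sub>R Iwg = 0" by (simp add: scaleR_minus_left)
      ultimately show ?thesis unfolding eq by simp
    qed
    have Pbb: "\<bar>Pb b z\<bar> \<le> norm b * (1 + cmod z)" for z
    proof -
      have f0: "\<bar>Pb b z\<bar> \<le> \<bar>fst b\<bar> + \<bar>snd b \<bullet> z\<bar>" unfolding Pb_def by (rule abs_triangle_ineq)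
      have f1: "\<bar>fst b\<bar> \<le> norm b" using norm_fst_le[of "fst b" "snd b"] by simp
      have f2: "cmod (snd b) \<le> norm b" using norm_snd_le[of "snd b" "fst b"] by simp
      have f3: "\<bar>snd b \<bullet> z\<bar> \<le> cmod (snd b) * cmod z" by (rule Cauchy_Schwarz_ineq2)
      have f4: "cmod (snd b) * cmod z \<le> norm b * cmod z" by (rule mult_right_mono[OF f2]) simp
      from f0 f1 f3 f4 have "\<bar>Pb b z\<bar> \<le> norm b + norm b * cmod z" by linarith
      then show ?thesis by (simp add: algebra_simps)
    qed
    have mu1: "\<bar>mu t\<bar> \<le> 1" for t
    proof -
      have "mu t = - (sg * eps * w t) + phi c t * Pb b (\<gamma> t)" by (simp add: mu_def)
      then have "\<bar>mu t\<bar> \<le> \<bar>- (sg * eps * w t)\<bar> + \<bar>phi c t * Pb b (\<gamma> t)\<bar>"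
        using abs_triangle_ineq by metis
      then have "\<bar>mu t\<bar> \<le> \<bar>sg * eps * w t\<bar> + \<bar>phi c t * Pb b (\<gamma> t)\<bar>" by simp
      also have "\<dots> \<le> eps * 1 + 1 * (norm b * (1 + R))"
      proof (intro add_mono)
        show "\<bar>sg * eps * w t\<bar> \<le> eps * 1" using sg eps w1[of t] by (simp add: abs_mult)
        have "\<bar>Pb b (\<gamma> t)\<bar> \<le> norm b * (1 + R)"
          using Pbb[of "\<gamma> t"] R(2)[of t] by (meson add_left_mono mult_left_mono norm_ge_zero order_trans)
        then have "phi c t * \<bar>Pb b (\<gamma> t)\<bar> \<le> 1 * (norm b * (1 + R))"
          by (rule mult_mono[OF phi_le1]) auto
        then show "\<bar>phi c t * Pb b (\<gamma> t)\<bar> \<le> 1 * (norm b * (1 + R))"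
          using phi_nonneg[of c t] by (simp add: abs_mult)
      qed
      also have "\<dots> \<le> eps + (B * (eps * (2*pi) * (1 + R))) * (1 + R)"
      proof -
        have "norm b \<le> B * (eps * (2*pi) * (1 + R))"
          using b(2) mult_left_mono[OF ny, of B] B(1) by linarith
        then have "norm b * (1 + R) \<le> (B * (eps * (2*pi) * (1 + R))) * (1 + R)"
          using R(1) by (intro mult_right_mono) auto
        then show ?thesis by simp
      qed
      also have "\<dots> = eps * (1 + B * (2*pi) * (1 + R)\<^sup>2)" by (simp add: algebra_simps power2_eq_square)
      also have "\<dots> = 1" by (rule epsid)
      finally show ?thesis .
    qed
    have phi0: "phi c t = 0" if "t \<in> {al..be}" for t
      by (rule phi_zero_window) (use that ab c1 c2 in auto)
    define lam where "lam = prim mu"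
    have dlam: "(lam has_real_derivative mu t) (at t)" for t unfolding lam_def by (rule prim_deriv[OF cmu])
    have derl: "deriv lam = mu" using dlam DERIV_imp_deriv by blast
    have lamper: "lam (t + 2*pi) = lam t" for t unfolding lam_def by (rule prim_periodic[OF cmu muper int0])
    have lam0: "lam 0 = 0" by (simp add: lam_def prim_def)
    have lamdg: "integral {0..2*pi} (\<lambda>t. lam t *\<^sub>R dg t) = 0"
    proof -
      have d: "((\<lambda>t. lam t *\<^sub>R \<gamma> t) has_vector_derivative (lam t *\<^sub>R dg t + mu t *\<^sub>R \<gamma> t)) (at t)" for t
        by (rule has_vector_derivative_scaleR[OF dlam g_der])
      have "((\<lambda>t. lam t *\<^sub>R dg t + mu t *\<^sub>R \<gamma> t) has_integral (lam (2*pi) *\<^sub>R \<gamma> (2*pi) - lam 0 *\<^sub>R \<gamma> 0)) {0..2*pi}"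
        by (rule fundamental_theorem_of_calculus) (auto intro: has_vector_derivative_at_within d)
      moreover have "lam (2*pi) = 0" using lamper[of 0] lam0 by simp
      ultimately have "((\<lambda>t. lam t *\<^sub>R dg t + mu t *\<^sub>R \<gamma> t) has_integral 0) {0..2*pi}"
        using lam0 by simp
      from has_integral_diff[OF this intg0]
      have "((\<lambda>t. lam t *\<^sub>R dg t) has_integral 0) {0..2*pi}" by simp
      then show ?thesis by (rule integral_unique)
    qed
    have lamS: "lam \<in> Lambda_star \<gamma>"
      unfolding Lambda_star_def
    proof (intro CollectI conjI allI)
      show "lam (t + 2*pi) = lam t" for t by (rule lamper)
      show "lam differentiable at t" for t using dlam[of t] unfolding has_field_derivative_def by (rule differentiableI)
      show "continuous_on UNIV (deriv lam)" using cmu derl by simp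
      show "integral {0..2*pi} (\<lambda>t. lam t *\<^sub>R dg t) = 0" by (rule lamdg)
      show "\<bar>deriv lam t\<bar> \<le> 1" for t using mu1 derl by simp
    qed
    have "integral {al..be} (\<lambda>t. lam t * (dg t \<bullet> v)) = - integral {al..be} (\<lambda>t. mu t * p t)"
      unfolding p_def by (rule by_parts0[OF _ dlam dinner cmu]) (use ab pa pb in \<open>auto simp: p_def intro!: continuous_intros\<close>)
    also have "\<dots> = sg * eps * integral {al..be} (\<lambda>t. (p t)\<^sup>2 / (\<bar>p t\<bar> + de))"
    proof -
      have pt: "mu t * p t = (- (sg * eps)) * ((p t)\<^sup>2 / (\<bar>p t\<bar> + de))" if "t \<in> {al..be}" for t
      proof -
        have "mu t = (- (sg * eps)) * (p t / (\<bar>p t\<bar> + de))" using phi0[OF that] by (simp add: mu_def w_def)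
        then show ?thesis by (simp add: power2_eq_square)
      qed
      have "integral {al..be} (\<lambda>t. mu t * p t) = integral {al..be} (\<lambda>t. (- (sg * eps)) * ((p t)\<^sup>2 / (\<bar>p t\<bar> + de)))"
        by (rule integral_cong) (rule pt)
      also have "\<dots> = (- (sg * eps)) * integral {al..be} (\<lambda>t. (p t)\<^sup>2 / (\<bar>p t\<bar> + de))"
        by (rule integral_mult_right)
      finally show ?thesis by simp
    qed
    finally show "\<exists>lam \<in> Lambda_star \<gamma>. integral {al..be} (\<lambda>t. lam t * (dg t \<bullet> v))
          = sg * eps * integral {al..be} (\<lambda>t. ((\<gamma> t - zm) \<bullet> v)\<^sup>2 / (\<bar>(\<gamma> t - zm) \<bullet> v\<bar> + de))"
      using lamS unfolding p_def by blast
  qed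
qed

lemma decomp:
  assumes "cmod v = 1"
  shows "z = of_real (z \<bullet> v) * v + of_real (z \<bullet> (\<i> * v)) * (\<i> * v)"
proof -
  have n: "(Re v)\<^sup>2 + (Im v)\<^sup>2 = 1" using assms by (simp add: cmod_def)
  define r where "r = of_real (z \<bullet> v) * v + of_real (z \<bullet> (\<i> * v)) * (\<i> * v)"
  have "Re r = Re z * ((Re v)\<^sup>2 + (Im v)\<^sup>2)"
    unfolding r_def by (simp add: inner_complex_def algebra_simps power2_eq_square)
  then have r1: "Re r = Re z" using n by simp
  have "Im r = Im z * ((Re v)\<^sup>2 + (Im v)\<^sup>2)"
    unfolding r_def by (simp add: inner_complex_def algebra_simps power2_eq_square)
  then have r2: "Im r = Im z" using n by simp
  have "z = r" by (rule complex_eqI) (rule r1[symmetric], rule r2[symmetric])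
  then show ?thesis unfolding r_def .
qed

lemma nu_norm: "zp \<noteq> zm \<Longrightarrow> cmod (nu zp zm) = 1"
  by (simp add: nu_def norm_mult norm_divide)

lemma nu_perp: "(zp - zm) \<bullet> nu zp zm = 0"
proof -
  define d where "d = zp - zm"
  have e: "nu zp zm = (1 / cmod d) *\<^sub>R (\<i> * d)"
    unfolding nu_def d_def by (simp add: scaleR_conv_of_real divide_inverse mult.commute)
  have "d \<bullet> (\<i> * d) = 0" by (simp add: inner_complex_def)
  then show ?thesis unfolding e d_def[symmetric] by (simp add: inner_scaleR_right)
qed

lemma dinner0: "((\<lambda>t. \<gamma> t \<bullet> v) has_real_derivative (dg t \<bullet> v)) (at t)"
  using dinner[of 0 v t] by simp

lemma c1D_bound:
  assumes ne: "zp \<noteq> zm" and ab: "al \<le> be"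
    and ends: "(\<gamma> al = zm \<and> \<gamma> be = zp) \<or> (\<gamma> al = zp \<and> \<gamma> be = zm)"
    and R: "\<And>t. cmod (\<gamma> t) \<le> R"
  shows "c_1D N zp zm \<le> 2 * (KN * (2 + 2 * KN * R)) * integral {al..be} (\<lambda>t. \<bar>(\<gamma> t - zm) \<bullet> nu zp zm\<bar>)"
proof -
  define v where "v = nu zp zm"
  define a where "a = zp \<bullet> v"
  define f where "f s = 1 - (N (of_real a * v + of_real s * (\<i> * v)))\<^sup>2" for s
  define p where "p t = (\<gamma> t - zm) \<bullet> v" for t
  have v1: "cmod v = 1" using nu_norm[OF ne] by (simp add: v_def)
  have azm: "a = zm \<bullet> v" using nu_perp[of zp zm] by (simp add: a_def v_def inner_diff_left)
  have cf: "continuous_on UNIV f" unfolding f_def by (intro continuous_intros)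
  have fe: "(\<lambda>s. 1 - (N (of_real (zp \<bullet> nu zp zm) * nu zp zm + of_real s * (\<i> * nu zp zm)))\<^sup>2) = f"
    unfolding f_def a_def v_def ..
  have c1: "c_1D N zp zm = 2 * \<bar>oint (zm \<bullet> (\<i> * v)) (zp \<bullet> (\<i> * v)) f\<bar>"
    unfolding c_1D_def Let_def fe v_def ..
  have o1: "oint (zm \<bullet> (\<i> * v)) (zp \<bullet> (\<i> * v)) f = prim f (zp \<bullet> (\<i> * v)) - prim f (zm \<bullet> (\<i> * v))"
    by (rule oint_prim[OF cf])
  define h where "h t = prim f (\<gamma> t \<bullet> (\<i> * v))" for t
  have dh: "(h has_real_derivative (f (\<gamma> t \<bullet> (\<i> * v)) * (dg t \<bullet> (\<i> * v)))) (at t)" for t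
    unfolding h_def by (rule DERIV_chain2[OF prim_deriv[OF cf] dinner0])
  have hi: "integral {al..be} (\<lambda>t. f (\<gamma> t \<bullet> (\<i> * v)) * (dg t \<bullet> (\<i> * v))) = h be - h al"
    by (rule integral_unique[OF integral_ftc[OF ab dh]])
  have eqabs: "\<bar>oint (zm \<bullet> (\<i> * v)) (zp \<bullet> (\<i> * v)) f\<bar> = \<bar>h be - h al\<bar>"
    using ends unfolding o1 h_def by auto
  obtain C3 where C3: "C3 = KN * (2 + 2 * KN * R)" by blast
  have pb: "\<bar>p t\<bar> \<le> 2 * R" for t
  proof -
    have zmR: "cmod zm \<le> R" using ends R by auto
    have "\<bar>p t\<bar> \<le> cmod (\<gamma> t - zm) * cmod v" unfolding p_def by (rule Cauchy_Schwarz_ineq2)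
    also have "\<dots> \<le> cmod (\<gamma> t) + cmod zm" using v1 norm_triangle_ineq4 by simp
    finally show ?thesis using R[of t] zmR by simp
  qed
  have pw: "\<bar>f (\<gamma> t \<bullet> (\<i> * v)) * (dg t \<bullet> (\<i> * v))\<bar> \<le> C3 * \<bar>p t\<bar>" for t
  proof -
    define x where "x = of_real a * v + of_real (\<gamma> t \<bullet> (\<i> * v)) * (\<i> * v)"
    have gx: "\<gamma> t - x = of_real (p t) * v"
    proof -
      have pt: "\<gamma> t \<bullet> v = a + p t" unfolding p_def azm by (simp add: inner_diff_left)
      have e1: "\<gamma> t = of_real (a + p t) * v + of_real (\<gamma> t \<bullet> (\<i> * v)) * (\<i> * v)"
        using decomp[OF v1, of "\<gamma> t"] unfolding pt .
      have "\<gamma> t - x = (of_real (a + p t) * v + of_real (\<gamma> t \<bullet> (\<i> * v)) * (\<i> * v)) - x"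
        by (rule arg_cong[where f="\<lambda>H. H - x"]) (rule e1)
      also have "\<dots> = of_real (p t) * v" unfolding x_def by (simp add: algebra_simps)
      finally show ?thesis .
    qed
    have Nv: "N v \<le> KN" using N_le[of v] v1 by simp
    have d1: "\<bar>1 - N x\<bar> \<le> \<bar>p t\<bar> * KN"
    proof -
      have "\<bar>N (\<gamma> t) - N x\<bar> \<le> N (\<gamma> t - x)" by (rule N_diff)
      also have "\<dots> = \<bar>p t\<bar> * N v" unfolding gx by (rule N_scale)
      also have "\<dots> \<le> \<bar>p t\<bar> * KN" using Nv by (intro mult_left_mono) auto
      finally show ?thesis using g_N[of t] by simp
    qed
    have d2: "0 \<le> 1 + N x" "1 + N x \<le> 2 + 2 * KN * R"
    proof -
      show "0 \<le> 1 + N x" using N_nonneg[of x] by simp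
      have "\<bar>p t\<bar> * KN \<le> (2 * R) * KN" using pb[of t] KN_pos by (intro mult_right_mono) auto
      also have "\<dots> = 2 * KN * R" by simp
      finally have "\<bar>p t\<bar> * KN \<le> 2 * KN * R" .
      moreover have "N x - 1 \<le> \<bar>1 - N x\<bar>" by linarith
      ultimately show "1 + N x \<le> 2 + 2 * KN * R" using d1 by linarith
    qed
    have "\<bar>f (\<gamma> t \<bullet> (\<i> * v))\<bar> = \<bar>1 - N x\<bar> * (1 + N x)"
    proof -
      have "f (\<gamma> t \<bullet> (\<i> * v)) = (1 - N x) * (1 + N x)" by (simp add: f_def x_def power2_eq_square algebra_simps)
      then show ?thesis using d2(1) by (simp add: abs_mult)
    qed
    also have "\<dots> \<le> (\<bar>p t\<bar> * KN) * (2 + 2 * KN * R)"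
      using d1 d2 by (intro mult_mono) auto
    also have "\<dots> = C3 * \<bar>p t\<bar>" unfolding C3 by (simp only: mult_ac)
    finally have ff: "\<bar>f (\<gamma> t \<bullet> (\<i> * v))\<bar> \<le> C3 * \<bar>p t\<bar>" .
    have dd: "\<bar>dg t \<bullet> (\<i> * v)\<bar> \<le> 1"
      using Cauchy_Schwarz_ineq2[of "dg t" "\<i> * v"] dg_norm[of t] v1 by (simp add: norm_mult)
    have "\<bar>f (\<gamma> t \<bullet> (\<i> * v)) * (dg t \<bullet> (\<i> * v))\<bar> \<le> (C3 * \<bar>p t\<bar>) * 1"
      unfolding abs_mult
    proof (rule mult_mono[OF ff dd])
      have "0 \<le> R" using R[of 0] norm_ge_zero order_trans by blast
      then show "0 \<le> C3 * \<bar>p t\<bar>" using KN_pos unfolding C3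
        by (intro mult_nonneg_nonneg add_nonneg_nonneg) auto
    qed simp
    then show ?thesis by simp
  qed
  have cp: "continuous_on UNIV p" unfolding p_def by (intro continuous_intros)
  have cfc: "continuous_on UNIV (\<lambda>x. f (\<gamma> x \<bullet> (\<i> * v)))"
    by (rule continuous_on_compose2[OF cf]) (auto intro!: continuous_intros)
  have "\<bar>h be - h al\<bar> \<le> integral {al..be} (\<lambda>t. C3 * \<bar>p t\<bar>)"
    unfolding hi[symmetric] real_norm_def[symmetric]
    by (rule integral_norm_bound_integral) (auto intro!: int_cont continuous_intros cfc cp pw)
  also have "\<dots> = C3 * integral {al..be} (\<lambda>t. \<bar>p t\<bar>)" by (rule integral_mult_right)
  finally have fin: "\<bar>h be - h al\<bar> \<le> C3 * integral {al..be} (\<lambda>t. \<bar>p t\<bar>)" .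
  show ?thesis using fin c1 eqabs unfolding C3 p_def v_def by linarith
qed

lemma reduce_pair:
  assumes ne: "\<gamma> tp \<noteq> \<gamma> tm"
  obtains al be s where "al < be" "be \<le> al + pi" "\<bar>s\<bar> = 1"
    "(\<gamma> al = \<gamma> tm \<and> \<gamma> be = \<gamma> tp) \<or> (\<gamma> al = \<gamma> tp \<and> \<gamma> be = \<gamma> tm)"
    "\<And>G :: real \<Rightarrow> real. (\<And>t. G (t + 2*pi) = G t) \<Longrightarrow> G tp - G tm = s * (G be - G al)"
proof -
  define k where "k = \<lfloor>(tp - tm)/(2*pi)\<rfloor>"
  define r where "r = (tp - tm) - 2 * pi * of_int k"
  have rr: "r \<in> {0..<2*pi}" using reduce_range[of "tp - tm"] by (simp add: r_def k_def)
  have tp: "tp = (tm + r) + 2 * pi * of_int k" by (simp add: r_def)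
  have Gk: "G tp = G (tm + r)" if "\<And>t. G (t + 2*pi) = G t" for G :: "real \<Rightarrow> real"
    unfolding tp by (rule periodic_int) (rule that)
  have gk: "\<gamma> tp = \<gamma> (tm + r)" unfolding tp by (rule periodic_int) (rule g_per)
  have r0: "r \<noteq> 0" using gk ne by auto
  show ?thesis
  proof (cases "r \<le> pi")
    case True
    show ?thesis
    proof (rule that[of tm "tm + r" 1])
      show "tm < tm + r" using rr r0 by auto
      show "tm + r \<le> tm + pi" using True by simp
      show "(\<gamma> tm = \<gamma> tm \<and> \<gamma> (tm + r) = \<gamma> tp) \<or> (\<gamma> tm = \<gamma> tp \<and> \<gamma> (tm + r) = \<gamma> tm)"
        using gk by simp
      show "G tp - G tm = 1 * (G (tm + r) - G tm)" if "\<And>t. G (t + 2*pi) = G t" for G :: "real \<Rightarrow> real"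
        using Gk[of G, OF that] by simp
    qed simp
  next
    case False
    show ?thesis
    proof (rule that[of "tm + r" "tm + 2*pi" "-1"])
      show "tm + r < tm + 2*pi" using rr by auto
      show "tm + 2*pi \<le> tm + r + pi" using False by simp
      show "(\<gamma> (tm + r) = \<gamma> tm \<and> \<gamma> (tm + 2*pi) = \<gamma> tp) \<or> (\<gamma> (tm + r) = \<gamma> tp \<and> \<gamma> (tm + 2*pi) = \<gamma> tm)"
        using gk g_per[of tm] by simp
      show "G tp - G tm = -1 * (G (tm + 2*pi) - G (tm + r))" if "\<And>t. G (t + 2*pi) = G t" for G :: "real \<Rightarrow> real"
        using Gk[of G, OF that] that[of tm] by simp
    qed simp
  qed
qed

lemma main_ctx:
  "\<exists>C>0. \<forall>tp tm. \<gamma> tp \<noteq> \<gamma> tm \<longrightarrow> c_1D N (\<gamma> tp) (\<gamma> tm) \<le> C * c_ENT \<gamma> tp tm"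
proof -
  obtain eps where eps: "eps > 0" and E:
    "\<And>v zm al be sg de. al < be \<Longrightarrow> be \<le> al + pi \<Longrightarrow> (\<gamma> al - zm) \<bullet> v = 0 \<Longrightarrow> (\<gamma> be - zm) \<bullet> v = 0
      \<Longrightarrow> \<bar>sg\<bar> = 1 \<Longrightarrow> de > 0 \<Longrightarrow>
      \<exists>lam \<in> Lambda_star \<gamma>. integral {al..be} (\<lambda>t. lam t * (dg t \<bullet> v))
          = sg * eps * integral {al..be} (\<lambda>t. ((\<gamma> t - zm) \<bullet> v)\<^sup>2 / (\<bar>(\<gamma> t - zm) \<bullet> v\<bar> + de))"
    using construct by blast
  obtain R where R: "R > 0" "\<And>t. cmod (\<gamma> t) \<le> R" using g_bound by blast
  define C2 where "C2 = 2 * (KN * (2 + 2 * KN * R))"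
  have C2: "C2 > 0" using KN_pos R by (simp add: C2_def add_pos_nonneg)
  show ?thesis
  proof (intro exI[of _ "C2/eps"] conjI allI impI)
    show "C2/eps > 0" using C2 eps by simp
    fix tp tm assume ne: "\<gamma> tp \<noteq> \<gamma> tm"
    define zp where "zp = \<gamma> tp"
    define zm where "zm = \<gamma> tm"
    define v where "v = nu zp zm"
    have ne': "zp \<noteq> zm" using ne by (simp add: zp_def zm_def)
    obtain al be s where ab: "al < be" "be \<le> al + pi" and s: "\<bar>s\<bar> = 1"
      and ends: "(\<gamma> al = zm \<and> \<gamma> be = zp) \<or> (\<gamma> al = zp \<and> \<gamma> be = zm)"
      and red: "\<And>G :: real \<Rightarrow> real. (\<And>t. G (t + 2*pi) = G t) \<Longrightarrow> G tp - G tm = s * (G be - G al)"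
      using reduce_pair[OF ne] unfolding zp_def zm_def by blast
    define p where "p t = (\<gamma> t - zm) \<bullet> v" for t
    have perp: "(zp - zm) \<bullet> v = 0" unfolding v_def by (rule nu_perp)
    have pa: "(\<gamma> al - zm) \<bullet> v = 0" and pb: "(\<gamma> be - zm) \<bullet> v = 0"
      using ends perp by auto
    have v1: "cmod v = 1" using nu_norm[OF ne'] by (simp add: v_def)
    have c1: "c_1D N zp zm \<le> C2 * integral {al..be} (\<lambda>t. \<bar>p t\<bar>)"
      using c1D_bound[OF ne' less_imp_le[OF ab(1)] ends R(2)] unfolding C2_def p_def v_def .
    have pbd: "\<bar>p t\<bar> \<le> 2 * R" for t
    proof -
      have zmR: "cmod zm \<le> R" using R(2) by (simp add: zm_def)
      have "\<bar>p t\<bar> \<le> cmod (\<gamma> t - zm) * cmod v" unfolding p_def by (rule Cauchy_Schwarz_ineq2)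
      also have "\<dots> \<le> cmod (\<gamma> t) + cmod zm" using v1 norm_triangle_ineq4 by simp
      finally show ?thesis using R(2)[of t] zmR by simp
    qed
    have cp: "continuous_on UNIV p" unfolding p_def by (intro continuous_intros)
    define S where "S = (\<lambda>lam. oint tm tp (\<lambda>t. lam t * (dg t \<bullet> v))) ` Lambda_star \<gamma>"
    have cENT: "c_ENT \<gamma> tp tm = Sup S" by (simp add: c_ENT_def S_def zp_def zm_def v_def)
    have rep: "oint tm tp (\<lambda>t. lam t * (dg t \<bullet> v)) = - s * integral {al..be} (\<lambda>t. deriv lam t * p t)"
      if lam: "lam \<in> Lambda_star \<gamma>" for lam
    proof -
      have lper: "lam (t + 2*pi) = lam t" for t using lam by (simp add: Lambda_star_def)
      have ldiff: "lam differentiable (at t)" for t using lam by (simp add: Lambda_star_def)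
      have cdl: "continuous_on UNIV (deriv lam)" using lam by (simp add: Lambda_star_def)
      have l0: "integral {0..2*pi} (\<lambda>t. lam t *\<^sub>R dg t) = 0" using lam by (simp add: Lambda_star_def)
      have dl: "(lam has_real_derivative deriv lam t) (at t)" for t
        using ldiff DERIV_deriv_iff_real_differentiable by blast
      have cl: "continuous_on UNIV lam"
        by (rule continuous_at_imp_continuous_on) (use dl DERIV_continuous in blast)
      define g where "g t = lam t * (dg t \<bullet> v)" for t
      have cg: "continuous_on UNIV g" unfolding g_def by (intro continuous_intros cl)
      have gper: "g (t + 2*pi) = g t" for t by (simp add: g_def lper dg_per)
      have g0: "integral {0..2*pi} g = 0"
      proof -
        have "integral {0..2*pi} ((\<lambda>x. x \<bullet> v) \<circ> (\<lambda>t. lam t *\<^sub>R dg t)) = integral {0..2*pi} (\<lambda>t. lam t *\<^sub>R dg t) \<bullet> v"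
          by (rule integral_linear[OF _ bounded_linear_inner_left]) (rule int_cont, intro continuous_intros cl)
        moreover have "(\<lambda>x. x \<bullet> v) \<circ> (\<lambda>t. lam t *\<^sub>R dg t) = g" by (auto simp: g_def o_def)
        ultimately show ?thesis using l0 by simp
      qed
      have "oint tm tp g = prim g tp - prim g tm" by (rule oint_prim[OF cg])
      also have "\<dots> = s * (prim g be - prim g al)"
        by (rule red) (rule prim_periodic[OF cg gper g0])
      also have "\<dots> = s * integral {al..be} g" using prim_shift[OF cg, of al be] ab by simp
      also have "integral {al..be} g = - integral {al..be} (\<lambda>t. deriv lam t * p t)"
        unfolding g_def p_def by (rule by_parts0[OF _ dl dinner cdl]) (use ab pa pb in \<open>auto intro!: continuous_intros\<close>)
      finally show ?thesis unfolding g_def by simp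
    qed
    have bdd: "bdd_above S"
    proof (rule bdd_aboveI)
      fix x assume "x \<in> S"
      then obtain lam where lam: "lam \<in> Lambda_star \<gamma>" and x: "x = oint tm tp (\<lambda>t. lam t * (dg t \<bullet> v))"
        unfolding S_def by blast
      have cdl: "continuous_on UNIV (deriv lam)" and d1: "\<And>t. \<bar>deriv lam t\<bar> \<le> 1"
        using lam by (auto simp: Lambda_star_def)
      have "\<bar>integral {al..be} (\<lambda>t. deriv lam t * p t)\<bar> \<le> integral {al..be} (\<lambda>t. 2 * R)"
        unfolding real_norm_def[symmetric]
      proof (rule integral_norm_bound_integral)
        show "(\<lambda>t. deriv lam t * p t) integrable_on {al..be}" by (rule int_cont) (intro continuous_intros cdl cp)
        show "(\<lambda>t. 2 * R) integrable_on {al..be}" by (rule int_cont) (rule continuous_on_const)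
        fix t
        have "\<bar>deriv lam t\<bar> * \<bar>p t\<bar> \<le> 1 * (2 * R)" using d1[of t] pbd[of t] by (intro mult_mono) auto
        then show "norm (deriv lam t * p t) \<le> 2 * R" by (simp add: abs_mult)
      qed
      then have ib: "\<bar>integral {al..be} (\<lambda>t. deriv lam t * p t)\<bar> \<le> (be - al) * (2 * R)"
        using ab by (simp add: algebra_simps)
      have "\<bar>x\<bar> = \<bar>integral {al..be} (\<lambda>t. deriv lam t * p t)\<bar>" using rep[OF lam] x s by (simp add: abs_mult)
      then show "x \<le> (be - al) * (2 * R)" using ib by linarith
    qed
    define I where "I = integral {al..be} (\<lambda>t. \<bar>p t\<bar>)"
    have low: "eps * (I - de * pi) \<le> Sup S" if de: "de > 0" for de
    proof -
      obtain lam where lam: "lam \<in> Lambda_star \<gamma>"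
        and li: "integral {al..be} (\<lambda>t. lam t * (dg t \<bullet> v)) = s * eps * integral {al..be} (\<lambda>t. (p t)\<^sup>2 / (\<bar>p t\<bar> + de))"
        using E[OF ab pa pb s de] unfolding p_def by blast
      define IQ where "IQ = integral {al..be} (\<lambda>t. (p t)\<^sup>2 / (\<bar>p t\<bar> + de))"
      have ss: "s * s = 1" using s by (metis abs_mult_self_eq mult_1)
      have "oint tm tp (\<lambda>t. lam t * (dg t \<bullet> v)) = eps * IQ"
      proof -
        have "oint tm tp (\<lambda>t. lam t * (dg t \<bullet> v)) = - s * integral {al..be} (\<lambda>t. deriv lam t * p t)"
          by (rule rep[OF lam])
        moreover have "integral {al..be} (\<lambda>t. lam t * (dg t \<bullet> v)) = - integral {al..be} (\<lambda>t. deriv lam t * p t)"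
        proof -
          have ldiff: "lam differentiable (at t)" for t using lam by (simp add: Lambda_star_def)
          have dl: "(lam has_real_derivative deriv lam t) (at t)" for t
            using ldiff DERIV_deriv_iff_real_differentiable by blast
          have cdl: "continuous_on UNIV (deriv lam)" using lam by (simp add: Lambda_star_def)
          show ?thesis unfolding p_def
            by (rule by_parts0[OF _ dl dinner cdl]) (use ab pa pb in \<open>auto intro!: continuous_intros\<close>)
        qed
        ultimately have "oint tm tp (\<lambda>t. lam t * (dg t \<bullet> v)) = s * integral {al..be} (\<lambda>t. lam t * (dg t \<bullet> v))"
          by simp
        also have "\<dots> = (s * s) * eps * IQ" using li by (simp add: IQ_def)
        finally show ?thesis using ss by simp
      qed
      then have el: "eps * IQ \<in> S" unfolding S_def using lam by force
      have "IQ \<ge> integral {al..be} (\<lambda>t. \<bar>p t\<bar> - de)"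
        unfolding IQ_def
      proof (rule integral_le)
        show "(\<lambda>t. \<bar>p t\<bar> - de) integrable_on {al..be}" by (rule int_cont) (intro continuous_intros cp)
        show "(\<lambda>t. (p t)\<^sup>2 / (\<bar>p t\<bar> + de)) integrable_on {al..be}"
          by (rule int_cont) (intro continuous_intros cp, use de in \<open>auto simp: add_pos_nonneg\<close>)
        fix t
        have pos: "0 < \<bar>p t\<bar> + de" using de by (simp add: add_nonneg_pos)
        have "(\<bar>p t\<bar> - de) * (\<bar>p t\<bar> + de) \<le> (p t)\<^sup>2"
        proof -
          have "(\<bar>p t\<bar> - de) * (\<bar>p t\<bar> + de) = \<bar>p t\<bar> * \<bar>p t\<bar> - de * de" by (simp add: algebra_simps)
          also have "\<dots> = (p t)\<^sup>2 - de * de" by (simp add: power2_eq_square)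
          finally show ?thesis by simp
        qed
        then show "\<bar>p t\<bar> - de \<le> (p t)\<^sup>2 / (\<bar>p t\<bar> + de)" using pos by (simp add: pos_le_divide_eq)
      qed
      moreover have "integral {al..be} (\<lambda>t. \<bar>p t\<bar> - de) = I - de * (be - al)"
      proof -
        have "integral {al..be} (\<lambda>t. \<bar>p t\<bar> - de) = integral {al..be} (\<lambda>t. \<bar>p t\<bar>) - integral {al..be} (\<lambda>t. de)"
          by (rule integral_diff) (rule int_cont, intro continuous_intros cp)+
        then show ?thesis using ab by (simp add: I_def mult.commute)
      qed
      moreover have "de * (be - al) \<le> de * pi" using ab de by (intro mult_left_mono) auto
      ultimately have "I - de * pi \<le> IQ" by linarith
      then have "eps * (I - de * pi) \<le> eps * IQ" using eps by (intro mult_left_mono) auto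
      also have "\<dots> \<le> Sup S" by (rule cSup_upper[OF el bdd])
      finally show ?thesis .
    qed
    have low2: "eps * I \<le> Sup S"
    proof (rule ccontr)
      assume "\<not> eps * I \<le> Sup S"
      then have gap: "eps * I - Sup S > 0" by simp
      define de where "de = (eps * I - Sup S) / (2 * eps * pi)"
      have de: "de > 0" using gap eps by (simp add: de_def)
      have "eps * (de * pi) = (eps * I - Sup S) / 2" using eps by (simp add: de_def field_simps)
      then have "eps * (I - de * pi) = eps * I - (eps * I - Sup S) / 2" by (simp add: algebra_simps)
      then have "eps * I - (eps * I - Sup S) / 2 \<le> Sup S" using low[OF de] by simp
      moreover have "Sup S < eps * I - (eps * I - Sup S) / 2"
      proof -
        define a where "a = eps * I"
        define b where "b = Sup S"
        have "b < a" using gap by (simp add: a_def b_def)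
        then have "b < a - (a - b) / 2" by (simp add: field_simps)
        then show ?thesis by (simp add: a_def b_def)
      qed
      ultimately show False by linarith
    qed
    have "c_1D N zp zm \<le> C2 * I" using c1 by (simp add: I_def)
    also have "\<dots> \<le> C2 * (Sup S / eps)"
      using low2 eps C2 by (intro mult_left_mono) (auto simp: pos_le_divide_eq mult.commute)
    also have "\<dots> = C2 / eps * c_ENT \<gamma> tp tm" by (simp add: cENT)
    finally show "c_1D N (\<gamma> tp) (\<gamma> tm) \<le> C2 / eps * c_ENT \<gamma> tp tm" by (simp add: zp_def zm_def)
  qed
qed

end

theorem lemma6p3:
  fixes N :: "complex \<Rightarrow> real" and \<gamma> :: "real \<Rightarrow> complex"
  assumes "is_norm N" and "strictly_convex_norm N" and "C1_away_from_0 N"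
    and "ccw_arclength_param N \<gamma>"
  shows "\<exists>C>0. \<forall>thp thm. \<gamma> thp \<noteq> \<gamma> thm \<longrightarrow>
           c_1D N (\<gamma> thp) (\<gamma> thm) \<le> C * c_ENT \<gamma> thp thm"
  using main_ctx[OF assms(1,2,4)] .

end
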